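(* Let $d\ge2$ and let $C_1,C_2$ be Archimedean $d$-copulas with strict generators $\phi_1,\phi_2$ that are regularly varying at $0$ with indices $-\alpha_1,-\alpha_2$, where $\alpha_1,\alpha_2\in[0,\infty]$. Then the following are equivalent: (1) $C_1<_{TD}C_2$; (2) $\lambda(C_1)<\lambda(C_2)$; (3) $\alpha_1<\alpha_2$.
   Context: A generator is a continuous, strictly decreasing function $\phi:[0,1]\to[0,\infty]$ with $\phi(1)=0$; it is strict if $\lim_{s\searrow0}\phi(s)=\infty$. A $d$-copula $C$ is Archimedean with strict generator $\phi$ if $C(\boldsymbol u)=\phi^{-1}(\sum_{k=1}^d\phi(u_k))$. $\phi$ is regularly varying at $0$ with index $-\alpha$, $\alpha\in[0,\infty)$, if $\lim_{s\searrow0}\phi(ts)/\phi(s)=t^{-\alpha}$ for all $t>0$; with index $-\infty$ ($\alpha=\infty$) if this limit is $\infty$ for $t\in(0,1)$, $1$ for $t=1$, $0$ for $t>1$. Tail dependence function: $\Lambda(\boldsymbol w;C)=\lim_{s\searrow0}C(s\boldsymbol w)/s$; tail dependence coefficient $\lambda(C)=\Lambda(\boldsymbol 1;C)=\lim_{s\searrow0}C(s,\dots,s)/s$. $C_1<_{TD}C_2$ means $\Lambda(\boldsymbol w;C_1)<\Lambda(\boldsymbol w;C_2)$ for all $\boldsymbol w\in(0,\infty)^d$. *)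

theory Defs
  imports "HOL-Analysis.Analysis"
begin

definition unit_cube :: "(real^'d) set" where
  "unit_cube = {u. \<forall>i. 0 \<le> u$i \<and> u$i \<le> 1}"

definition is_copula :: "(real^'d \<Rightarrow> real) \<Rightarrow> bool" where
  "is_copula C \<longleftrightarrow>
     (\<forall>u\<in>unit_cube. 0 \<le> C u \<and> C u \<le> 1) \<and>
     (\<forall>u\<in>unit_cube. (\<exists>i. u$i = 0) \<longrightarrow> C u = 0) \<and>
     (\<forall>u\<in>unit_cube. \<forall>i. (\<forall>j. j \<noteq> i \<longrightarrow> u$j = 1) \<longrightarrow> C u = u$i) \<and>
     (\<forall>a\<in>unit_cube. \<forall>b\<in>unit_cube. (\<forall>i. a$i \<le> b$i) \<longrightarrow>
        0 \<le> (\<Sum>S\<in>Pow UNIV. (-1) ^ card (UNIV - S) *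
                 C (\<chi> i. if i \<in> S then b$i else a$i)))"

text \<open>Strict generator, represented by its restriction to (0,1]; the value
  phi(0) = infinity is encoded by the limit condition.\<close>
definition strict_generator :: "(real \<Rightarrow> real) \<Rightarrow> bool" where
  "strict_generator \<phi> \<longleftrightarrow>
     continuous_on {0<..1} \<phi> \<and> strict_antimono_on {0<..1} \<phi> \<and> \<phi> 1 = 0 \<and>
     filterlim \<phi> at_top (at_right 0)"

text \<open>Archimedean with strict generator phi: C(u) = phi^{-1}(sum phi(u_k)),
  where phi^{-1}(infinity) = 0, i.e. C(u) = 0 when some u_k = 0.\<close>
definition archimedean_with :: "(real^'d \<Rightarrow> real) \<Rightarrow> (real \<Rightarrow> real) \<Rightarrow> bool" where
  "archimedean_with C \<phi> \<longleftrightarrow>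
     (\<forall>u\<in>unit_cube. C u = (if \<exists>i. u$i = 0 then 0
                             else inv_into {0<..1} \<phi> (\<Sum>i\<in>UNIV. \<phi> (u$i))))"

definition reg_var_zero :: "(real \<Rightarrow> real) \<Rightarrow> ereal \<Rightarrow> bool" where
  "reg_var_zero \<phi> \<alpha> \<longleftrightarrow> 0 \<le> \<alpha> \<and>
     (\<alpha> \<noteq> \<infinity> \<longrightarrow> (\<forall>t>0. ((\<lambda>s. \<phi> (t * s) / \<phi> s) \<longlongrightarrow> t powr (- real_of_ereal \<alpha>)) (at_right 0))) \<and>
     (\<alpha> = \<infinity> \<longrightarrow> (\<forall>t>0.
        (t < 1 \<longrightarrow> filterlim (\<lambda>s. \<phi> (t * s) / \<phi> s) at_top (at_right 0)) \<and>
        (t = 1 \<longrightarrow> ((\<lambda>s. \<phi> (t * s) / \<phi> s) \<longlongrightarrow> 1) (at_right 0)) \<and>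
        (t > 1 \<longrightarrow> ((\<lambda>s. \<phi> (t * s) / \<phi> s) \<longlongrightarrow> 0) (at_right 0))))"

definition tail_dep_fun :: "(real^'d \<Rightarrow> real) \<Rightarrow> real^'d \<Rightarrow> real" where
  "tail_dep_fun C w = Lim (at_right 0) (\<lambda>s. C (s *\<^sub>R w) / s)"

definition tail_dep_coef :: "(real^'d \<Rightarrow> real) \<Rightarrow> real" where
  "tail_dep_coef C = tail_dep_fun C (\<chi> i. 1)"

definition TD_less :: "(real^'d \<Rightarrow> real) \<Rightarrow> (real^'d \<Rightarrow> real) \<Rightarrow> bool" where
  "TD_less C1 C2 \<longleftrightarrow> (\<forall>w. (\<forall>i. 0 < w$i) \<longrightarrow> tail_dep_fun C1 w < tail_dep_fun C2 w)"

end

theory Submission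
  imports Defs
begin


lemma gen_props:
  assumes "strict_generator \<phi>"
  shows gen_cont: "continuous_on {0<..1} \<phi>"
    and gen_lt: "\<And>x y. 0 < x \<Longrightarrow> x < y \<Longrightarrow> y \<le> 1 \<Longrightarrow> \<phi> y < \<phi> x"
    and gen_one: "\<phi> 1 = 0"
    and gen_top: "filterlim \<phi> at_top (at_right 0)"
  using assms unfolding strict_generator_def monotone_on_def by auto

lemma gen_le:
  assumes "strict_generator \<phi>" "0 < x" "x \<le> y" "y \<le> 1"
  shows "\<phi> y \<le> \<phi> x"
  using gen_lt[OF assms(1), of x y] assms by (cases "x = y") auto

lemma gen_nonneg:
  assumes "strict_generator \<phi>" "0 < x" "x \<le> 1"
  shows "0 \<le> \<phi> x"
  using gen_le[OF assms(1,2,3)] gen_one[OF assms(1)] by simp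

lemma gen_pos:
  assumes "strict_generator \<phi>" "0 < x" "x < 1"
  shows "0 < \<phi> x"
  using gen_lt[OF assms(1,2,3)] gen_one[OF assms(1)] by simp

lemma gen_surj:
  assumes g: "strict_generator \<phi>" and x: "0 \<le> x"
  shows "x \<in> \<phi> ` {0<..1}"
proof -
  have "eventually (\<lambda>s. \<phi> s > x) (at_right 0)"
    using gen_top[OF g] by (simp add: filterlim_at_top_dense)
  then obtain b where b: "b > 0" "\<And>y. y > 0 \<Longrightarrow> y < b \<Longrightarrow> \<phi> y > x"
    unfolding eventually_at_right_field by auto
  define a where "a = min (b/2) (1/2)"
  have a: "0 < a" "a < b" "a \<le> 1" using b unfolding a_def by auto
  have "\<phi> a \<ge> x" using b(2)[OF a(1,2)] by simp
  moreover have "\<phi> 1 \<le> x" using gen_one[OF g] x by simp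
  moreover have "continuous_on {a..1} \<phi>"
    by (rule continuous_on_subset[OF gen_cont[OF g]]) (use a in auto)
  ultimately obtain u where "a \<le> u" "u \<le> 1" "\<phi> u = x"
    using IVT2'[of \<phi> 1 x a] a by auto
  then show ?thesis using a by force
qed

lemma psi_props:
  assumes g: "strict_generator \<phi>" and x: "0 \<le> x"
  shows "inv_into {0<..1} \<phi> x \<in> {0<..1}" "\<phi> (inv_into {0<..1} \<phi> x) = x"
  using gen_surj[OF g x] inv_into_into[of x \<phi> "{0<..1}"] by (auto intro: f_inv_into_f)

lemma psi_less:
  assumes g: "strict_generator \<phi>" and x: "0 \<le> x" and u: "0 < u" "u \<le> 1" and l: "\<phi> u < x"
  shows "inv_into {0<..1} \<phi> x < u"
proof (rule ccontr)
  assume "\<not> ?thesis"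
  then have "\<phi> (inv_into {0<..1} \<phi> x) \<le> \<phi> u"
    using psi_props[OF g x] u by (intro gen_le[OF g]) auto
  then show False using psi_props[OF g x] l by simp
qed

lemma psi_greater:
  assumes g: "strict_generator \<phi>" and x: "0 \<le> x" and u: "0 < u" "u \<le> 1" and l: "\<phi> u > x"
  shows "inv_into {0<..1} \<phi> x > u"
proof (rule ccontr)
  assume "\<not> ?thesis"
  then have "\<phi> u \<le> \<phi> (inv_into {0<..1} \<phi> x)"
    using psi_props[OF g x] u by (intro gen_le[OF g]) auto
  then show False using psi_props[OF g x] l by simp
qed

lemma squeeze:
  fixes y :: "real \<Rightarrow> real"
  assumes "L \<ge> 0" "eventually (\<lambda>s. y s > 0) F"
    and "\<And>t. t > L \<Longrightarrow> eventually (\<lambda>s. y s < t) F"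
    and "\<And>t. 0 < t \<Longrightarrow> t < L \<Longrightarrow> eventually (\<lambda>s. y s > t) F"
  shows "(y \<longlongrightarrow> L) F"
proof (rule order_tendstoI)
  fix a assume a: "a < L"
  show "eventually (\<lambda>s. a < y s) F"
  proof (cases "a \<le> 0")
    case True then show ?thesis using assms(2) by (auto elim: eventually_mono)
  next
    case False then show ?thesis using assms(4)[of a] a by auto
  qed
next
  fix a assume "a > L" then show "eventually (\<lambda>s. y s < a) F" using assms(3) by auto
qed

lemma small:
  fixes c :: real
  assumes "c > 0"
  shows "eventually (\<lambda>s. 0 < s \<and> s * c < 1) (at_right 0)"
  unfolding eventually_at_right_field
  by (rule exI[of _ "1/c"]) (use assms in \<open>auto simp: field_simps\<close>)

lemma scale_filterlim:
  fixes t :: real assumes "t > 0"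
  shows "filterlim (\<lambda>s. t * s) (at_right 0) (at_right 0)"
proof (rule tendsto_imp_filterlim_at_right)
  show "((\<lambda>s. t * s) \<longlongrightarrow> 0) (at_right 0)"
    by (rule tendsto_eq_intros | simp)+
  show "eventually (\<lambda>s. t * s > 0) (at_right 0)"
    using eventually_at_right_less[of "0::real"] by (auto elim: eventually_mono simp: assms)
qed



definition Lfun :: "ereal \<Rightarrow> real^'d \<Rightarrow> real" where
  "Lfun \<alpha> w = (if \<alpha> = 0 then 0 else if \<alpha> = \<infinity> then Min (range (\<lambda>i. w$i))
     else (\<Sum>i\<in>UNIV. w$i powr (- real_of_ereal \<alpha>)) powr (-1 / real_of_ereal \<alpha>))"

lemma Min_pos:
  fixes w :: "real^'d"
  assumes "\<forall>i. 0 < w$i"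
  shows "0 < Min (range (\<lambda>i. w$i))"
  using assms by (subst Min_gr_iff) auto

lemma Lfun_nonneg:
  fixes w :: "real^'d"
  assumes "\<forall>i. 0 < w$i"
  shows "0 \<le> Lfun \<alpha> w"
  using Min_pos[OF assms] assms unfolding Lfun_def by (auto intro: less_imp_le)

lemma sum_ratio:
  fixes w :: "real^'d"
  assumes "\<forall>i. 0 < w$i" "t > 0"
  shows "(\<Sum>i\<in>UNIV. (w$i/t) powr (- a)) = (\<Sum>i\<in>UNIV. w$i powr (- a)) * t powr a"
proof -
  have "(w$i/t) powr (- a) = w$i powr (- a) * t powr a" for i
  proof -
    have "(w$i/t) powr (- a) = w$i powr (- a) / t powr (- a)"
      by (rule powr_divide)
    moreover have "t powr (- a) = 1 / t powr a" by (simp add: powr_minus_divide)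
    ultimately show ?thesis by simp
  qed
  then show ?thesis by (simp add: sum_distrib_right)
qed

lemma pw_gt:
  fixes a S t :: real
  assumes "a > 0" "S > 0" "t > 0" "t > S powr (-1/a)"
  shows "S * t powr a > 1"
proof -
  have "(S powr (-1/a)) powr a < t powr a"
    using assms by (intro powr_less_mono2) auto
  moreover have "(S powr (-1/a)) powr a = 1 / S"
  proof -
    have "(S powr (-1/a)) powr a = S powr ((-1/a) * a)" by (rule powr_powr)
    also have "(-1/a) * a = -1" using assms by simp
    finally show ?thesis using powr_neg_one[of S] assms by simp
  qed
  ultimately have "S * (1/S) < S * t powr a"
    using assms by (intro mult_strict_left_mono) auto
  then show ?thesis using assms by simp
qed

lemma pw_lt:
  fixes a S t :: real
  assumes "a > 0" "S > 0" "t > 0" "t < S powr (-1/a)"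
  shows "S * t powr a < 1"
proof -
  have "t powr a < (S powr (-1/a)) powr a"
    using assms by (intro powr_less_mono2) auto
  moreover have "(S powr (-1/a)) powr a = 1 / S"
  proof -
    have "(S powr (-1/a)) powr a = S powr ((-1/a) * a)" by (rule powr_powr)
    also have "(-1/a) * a = -1" using assms by simp
    finally show ?thesis using powr_neg_one[of S] assms by simp
  qed
  ultimately have "S * t powr a < S * (1/S)"
    using assms by (intro mult_strict_left_mono) auto
  then show ?thesis using assms by simp
qed

lemma Spos:
  fixes w :: "real^'d"
  assumes "\<forall>i. 0 < w$i"
  shows "0 < (\<Sum>i\<in>UNIV. w$i powr (- a))"
proof (rule sum_pos)
  fix i show "0 < w$i powr (- a)" using assms[rule_format, of i] by simp
qed auto

lemma tail_limit:
  fixes C :: "real^'d \<Rightarrow> real" and \<phi> :: "real \<Rightarrow> real" and w :: "real^'d"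
  assumes card: "CARD('d) \<ge> 2" and g: "strict_generator \<phi>"
    and arch: "archimedean_with C \<phi>" and rv: "reg_var_zero \<phi> \<alpha>"
    and wpos: "\<forall>i. 0 < w$i"
  shows "((\<lambda>s. C (s *\<^sub>R w) / s) \<longlongrightarrow> Lfun \<alpha> w) (at_right 0)"
proof -
  define x where "x s = (\<Sum>i\<in>UNIV. \<phi> (s * w$i))" for s
  define \<psi> where "\<psi> = inv_into {0<..1} \<phi>"
  have ev1: "eventually (\<lambda>s. \<forall>i. 0 < s \<and> s * w$i < 1) (at_right 0)"
    by (rule eventually_all_finite) (use small wpos in auto)
  have xnn: "eventually (\<lambda>s. 0 \<le> x s) (at_right 0)"
    using ev1
  proof (rule eventually_mono)
    fix s assume s: "\<forall>i. 0 < s \<and> s * w$i < 1"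
    have "0 \<le> \<phi> (s * w$i)" for i
    proof (rule gen_nonneg[OF g])
      show "0 < s * w$i" using s wpos by simp
      show "s * w$i \<le> 1" using s by (simp add: less_imp_le)
    qed
    then show "0 \<le> x s" unfolding x_def by (simp add: sum_nonneg)
  qed
  have Ceq: "eventually (\<lambda>s. C (s *\<^sub>R w) / s = \<psi> (x s) / s) (at_right 0)"
    using ev1
  proof (rule eventually_mono)
    fix s assume s: "\<forall>i. 0 < s \<and> s * w$i < 1"
    have pos: "0 < s * w$i" for i using s wpos by simp
    have uc: "s *\<^sub>R w \<in> unit_cube" unfolding unit_cube_def
      using pos s by (simp add: less_imp_le)
    have nz: "\<not> (\<exists>i. (s *\<^sub>R w)$i = 0)"
    proof
      assume "\<exists>i. (s *\<^sub>R w)$i = 0"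
      then obtain i where "(s *\<^sub>R w)$i = 0" by blast
      then show False using pos[of i] by auto
    qed
    show "C (s *\<^sub>R w) / s = \<psi> (x s) / s"
      using arch[unfolded archimedean_with_def, rule_format, OF uc] nz
      unfolding x_def \<psi>_def by simp
  qed
  have up: "eventually (\<lambda>s. \<psi> (x s) / s < t) (at_right 0)"
    if t: "t > 0" and e: "eventually (\<lambda>s. \<phi> (t * s) < x s) (at_right 0)" for t
    using e xnn small[OF t] eventually_at_right_less[of "0::real"]
  proof (eventually_elim)
    case (elim s)
    have ts: "t * s < 1" "0 < t * s" using elim t by (auto simp: mult.commute)
    have "\<psi> (x s) < t * s" unfolding \<psi>_def
      using elim ts by (intro psi_less[OF g]) auto
    then show ?case using elim by (simp add: pos_divide_less_eq)
  qed
  have lo: "eventually (\<lambda>s. \<psi> (x s) / s > t) (at_right 0)"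
    if t: "t > 0" and e: "eventually (\<lambda>s. \<phi> (t * s) > x s) (at_right 0)" for t
    using e xnn small[OF t] eventually_at_right_less[of "0::real"]
  proof (eventually_elim)
    case (elim s)
    have ts: "t * s < 1" "0 < t * s" using elim t by (auto simp: mult.commute)
    have "\<psi> (x s) > t * s" unfolding \<psi>_def
      using elim ts by (intro psi_greater[OF g]) auto
    then show ?case using elim by (simp add: pos_less_divide_eq)
  qed
  have ratio_gt: "eventually (\<lambda>s. \<phi> (t * s) < x s) (at_right 0)"
    if t: "t > 0" and lim: "((\<lambda>s. x s / \<phi> (t * s)) \<longlongrightarrow> R) (at_right 0)" and R: "R > 1" for t R
    using order_tendstoD(1)[OF lim R] small[OF t]
  proof (eventually_elim)
    case (elim s)
    then have "0 < \<phi> (t * s)" using t by (intro gen_pos[OF g]) (auto simp: mult.commute)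
    then show ?case using elim by (simp add: less_divide_eq)
  qed
  have ratio_lt: "eventually (\<lambda>s. \<phi> (t * s) > x s) (at_right 0)"
    if t: "t > 0" and lim: "((\<lambda>s. x s / \<phi> (t * s)) \<longlongrightarrow> R) (at_right 0)" and R: "R < 1" for t R
    using order_tendstoD(2)[OF lim R] small[OF t]
  proof (eventually_elim)
    case (elim s)
    then have "0 < \<phi> (t * s)" using t by (intro gen_pos[OF g]) (auto simp: mult.commute)
    then show ?case using elim by (simp add: divide_less_eq)
  qed
  have ratio_lim: "((\<lambda>s. x s / \<phi> (t * s)) \<longlongrightarrow> (\<Sum>i\<in>UNIV. f i)) (at_right 0)"
    if t: "t > 0" and fl: "\<And>i. ((\<lambda>s. \<phi> ((w$i/t) * s) / \<phi> s) \<longlongrightarrow> f i) (at_right 0)" for t f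
  proof -
    have eq: "x s / \<phi> (t * s) = (\<Sum>i\<in>UNIV. \<phi> ((w$i/t) * (t * s)) / \<phi> (t * s))" for s
    proof -
      have "\<And>i. (w$i/t) * (t * s) = s * w$i" using t by (simp add: field_simps)
      then show ?thesis unfolding x_def by (simp add: sum_divide_distrib)
    qed
    have "((\<lambda>s. \<Sum>i\<in>UNIV. \<phi> ((w$i/t) * (t * s)) / \<phi> (t * s)) \<longlongrightarrow> (\<Sum>i\<in>UNIV. f i)) (at_right 0)"
    proof (rule tendsto_sum)
      fix i
      show "((\<lambda>s. \<phi> ((w$i/t) * (t * s)) / \<phi> (t * s)) \<longlongrightarrow> f i) (at_right 0)"
        using filterlim_compose[OF fl[of i] scale_filterlim[OF t]] by simp
    qed
    then show ?thesis unfolding eq .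
  qed
  have "((\<lambda>s. \<psi> (x s) / s) \<longlongrightarrow> Lfun \<alpha> w) (at_right 0)"
  proof (rule squeeze)
    show "0 \<le> Lfun \<alpha> w" using Lfun_nonneg[OF wpos] .
    show "eventually (\<lambda>s. \<psi> (x s) / s > 0) (at_right 0)"
      using xnn eventually_at_right_less[of "0::real"]
      by eventually_elim (use psi_props(1)[OF g] in \<open>auto simp: \<psi>_def\<close>)
  next
    fix t assume tL: "t > Lfun \<alpha> w"
    then have t: "t > 0" using Lfun_nonneg[OF wpos, of \<alpha>] by linarith
    show "eventually (\<lambda>s. \<psi> (x s) / s < t) (at_right 0)"
    proof (cases "\<alpha> = \<infinity>")
      case True
      obtain j where j: "w$j = Min (range (\<lambda>i. w$i))"
      proof -
        have "Min (range (\<lambda>i. w$i)) \<in> range (\<lambda>i. w$i)" by (rule Min_in) auto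
        then show ?thesis using that by (metis imageE)
      qed
      have "t > w$j" using tL True j unfolding Lfun_def by auto
      have "eventually (\<lambda>s. \<phi> (t * s) < x s) (at_right 0)"
        using ev1 small[OF t]
      proof eventually_elim
        case (elim s)
        have pos: "0 < s * w$i" for i using elim wpos by simp
        have "\<phi> (t * s) < \<phi> (s * w$j)"
          using elim \<open>t > w$j\<close> pos[of j] by (intro gen_lt[OF g]) (auto simp: mult.commute)
        also have "\<phi> (s * w$j) \<le> x s" unfolding x_def
        proof (rule member_le_sum)
          fix i assume "i \<in> UNIV - {j}"
          show "0 \<le> \<phi> (s * w$i)" using pos[of i] elim by (intro gen_nonneg[OF g]) (auto simp: less_imp_le)
        qed auto
        finally show ?case .
      qed
      then show ?thesis by (rule up[OF t])
    next
      case False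
      then obtain a where a: "\<alpha> = ereal a" "a \<ge> 0"
        using rv unfolding reg_var_zero_def by (cases \<alpha>) auto
      have fl: "\<And>r. r > 0 \<Longrightarrow> ((\<lambda>s. \<phi> (r * s) / \<phi> s) \<longlongrightarrow> r powr (- a)) (at_right 0)"
        using rv a unfolding reg_var_zero_def by auto
      have lim: "((\<lambda>s. x s / \<phi> (t * s)) \<longlongrightarrow> (\<Sum>i\<in>UNIV. (w$i/t) powr (- a))) (at_right 0)"
        by (rule ratio_lim[OF t], rule fl) (simp add: wpos t)
      have "(\<Sum>i\<in>UNIV. (w$i/t) powr (- a)) > 1"
      proof (cases "a = 0")
        case True
        have "(w$i/t) powr (- a) = 1" for i
          using True wpos[rule_format, of i] t by simp
        then show ?thesis using card by simp
      next
        case False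
        then have a0: "a > 0" using a by simp
        have "Lfun \<alpha> w = (\<Sum>i\<in>UNIV. w$i powr (- a)) powr (-1/a)"
          using a a0 unfolding Lfun_def by simp
        then show ?thesis using pw_gt[OF a0 Spos[OF wpos] t] tL sum_ratio[OF wpos t] by simp
      qed
      then show ?thesis using up[OF t ratio_gt[OF t lim]] by simp
    qed
  next
    fix t assume t: "0 < t" and tL: "t < Lfun \<alpha> w"
    show "eventually (\<lambda>s. \<psi> (x s) / s > t) (at_right 0)"
    proof (cases "\<alpha> = \<infinity>")
      case True
      have tw: "t < w$i" for i
      proof -
        have "Min (range (\<lambda>i. w$i)) \<le> w$i" by (rule Min_le) auto
        then show ?thesis using tL True unfolding Lfun_def by auto
      qed
      have l0: "((\<lambda>s. \<phi> ((w$i/t) * s) / \<phi> s) \<longlongrightarrow> 0) (at_right 0)" for i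
      proof -
        have "w$i/t > 1" using tw[of i] t by simp
        moreover have "w$i/t > 0" using t wpos by simp
        ultimately show ?thesis using rv True unfolding reg_var_zero_def by blast
      qed
      have lim: "((\<lambda>s. x s / \<phi> (t * s)) \<longlongrightarrow> 0) (at_right 0)"
        using ratio_lim[OF t, where f="\<lambda>i. 0", OF l0] by simp
      show ?thesis using lo[OF t ratio_lt[OF t lim]] by simp
    next
      case False
      then obtain a where a: "\<alpha> = ereal a" "a \<ge> 0"
        using rv unfolding reg_var_zero_def by (cases \<alpha>) auto
      have fl: "\<And>r. r > 0 \<Longrightarrow> ((\<lambda>s. \<phi> (r * s) / \<phi> s) \<longlongrightarrow> r powr (- a)) (at_right 0)"
        using rv a unfolding reg_var_zero_def by auto
      have lim: "((\<lambda>s. x s / \<phi> (t * s)) \<longlongrightarrow> (\<Sum>i\<in>UNIV. (w$i/t) powr (- a))) (at_right 0)"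
        by (rule ratio_lim[OF t], rule fl) (simp add: wpos t)
      have "(\<Sum>i\<in>UNIV. (w$i/t) powr (- a)) < 1"
      proof (cases "a = 0")
        case True
        then have "Lfun \<alpha> w = 0" using a unfolding Lfun_def by (simp add: zero_ereal_def)
        then show ?thesis using t tL by simp
      next
        case False
        then have a0: "a > 0" using a by simp
        have "Lfun \<alpha> w = (\<Sum>i\<in>UNIV. w$i powr (- a)) powr (-1/a)"
          using a a0 unfolding Lfun_def by simp
        then show ?thesis using pw_lt[OF a0 Spos[OF wpos] t] tL sum_ratio[OF wpos t] by simp
      qed
      then show ?thesis using lo[OF t ratio_lt[OF t lim]] by simp
    qed
  qed
  then show ?thesis using tendsto_cong[OF Ceq] by simp
qed



lemma sum_gt_term:
  fixes f :: "'d::finite \<Rightarrow> real"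
  assumes card: "CARD('d) \<ge> 2" and pos: "\<And>i. 0 < f i"
  shows "f i < (\<Sum>j\<in>UNIV. f j)"
proof -
  have "card (UNIV - {i}) \<ge> 1" using card by (simp add: card_Diff_singleton)
  then obtain j where j: "j \<in> UNIV - {i}"
    by (metis card.empty ex_in_conv not_one_le_zero)
  have "(\<Sum>j\<in>UNIV. f j) = f i + (\<Sum>j\<in>UNIV - {i}. f j)"
    by (simp add: sum.remove)
  moreover have "f j \<le> (\<Sum>j\<in>UNIV - {i}. f j)"
    using j pos by (intro member_le_sum) (auto intro: less_imp_le)
  ultimately show ?thesis using pos[of j] by simp
qed

lemma norm_ineq:
  fixes w :: "real^'d"
  assumes card: "CARD('d) \<ge> 2" and wpos: "\<forall>i. 0 < w$i" and ab: "0 < a" "a < b"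
  shows "(\<Sum>i\<in>UNIV. w$i powr (- a)) powr (-1/a) < (\<Sum>i\<in>UNIV. w$i powr (- b)) powr (-1/b)"
proof -
  define Sa where "Sa = (\<Sum>i\<in>UNIV. w$i powr (- a))"
  define Sb where "Sb = (\<Sum>i\<in>UNIV. w$i powr (- b))"
  have pa: "0 < w$i powr (- a)" for i using wpos[rule_format, of i] by simp
  have Sa: "0 < Sa" unfolding Sa_def by (rule sum_pos) (use pa in auto)
  define q where "q i = w$i powr (- a) / Sa" for i
  have q0: "0 < q i" for i unfolding q_def using pa Sa by simp
  have q1: "q i < 1" for i
  proof -
    have "w$i powr (- a) < Sa" unfolding Sa_def by (rule sum_gt_term[OF card]) (use pa in auto)
    then show ?thesis unfolding q_def using Sa by (simp add: pos_divide_less_eq)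
  qed
  have key: "w$i powr (- b) < q i * Sa powr (b/a)" for i
  proof -
    have "w$i powr (- b) = (w$i powr (- a)) powr (b/a)"
      using ab by (simp add: powr_powr)
    also have "w$i powr (- a) = q i * Sa" unfolding q_def using Sa by simp
    also have "(q i * Sa) powr (b/a) = q i powr (b/a) * Sa powr (b/a)"
      using q0[of i] Sa by (simp add: powr_mult)
    also have "q i powr (b/a) < q i powr 1"
      using q0[of i] q1[of i] ab by (intro powr_less_mono') auto
    then have "q i powr (b/a) * Sa powr (b/a) < q i * Sa powr (b/a)"
      using q0[of i] Sa by simp
    finally show ?thesis .
  qed
  have "Sb < (\<Sum>i\<in>UNIV. q i * Sa powr (b/a))"
    unfolding Sb_def by (rule sum_strict_mono) (use key in auto)
  also have "(\<Sum>i\<in>UNIV. q i) = 1"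
    unfolding q_def Sa_def using Sa unfolding Sa_def by (simp add: sum_divide_distrib[symmetric])
  then have "(\<Sum>i\<in>UNIV. q i * Sa powr (b/a)) = Sa powr (b/a)"
    by (simp add: sum_distrib_right[symmetric])
  finally have lt: "Sb < Sa powr (b/a)" .
  have Sb: "0 < Sb" unfolding Sb_def by (rule Spos[OF wpos])
  have "(Sa powr (b/a)) powr (-1/b) < Sb powr (-1/b)"
    using lt Sb ab by (intro powr_less_mono2_neg) auto
  moreover have "(Sa powr (b/a)) powr (-1/b) = Sa powr (-1/a)"
    using ab by (simp add: powr_powr)
  ultimately show ?thesis unfolding Sa_def Sb_def by simp
qed

lemma Lfun_min_bound:
  fixes w :: "real^'d"
  assumes card: "CARD('d) \<ge> 2" and wpos: "\<forall>i. 0 < w$i" and a: "0 < a"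
  shows "(\<Sum>i\<in>UNIV. w$i powr (- a)) powr (-1/a) < Min (range (\<lambda>i. w$i))"
proof -
  obtain j where j: "w$j = Min (range (\<lambda>i. w$i))"
  proof -
    have "Min (range (\<lambda>i. w$i)) \<in> range (\<lambda>i. w$i)" by (rule Min_in) auto
    then show ?thesis using that by (metis imageE)
  qed
  have pa: "0 < w$i powr (- a)" for i using wpos[rule_format, of i] by simp
  have "w$j powr (- a) < (\<Sum>i\<in>UNIV. w$i powr (- a))"
    by (rule sum_gt_term[OF card]) (use pa in auto)
  then have "(\<Sum>i\<in>UNIV. w$i powr (- a)) powr (-1/a) < (w$j powr (- a)) powr (-1/a)"
    using a pa by (intro powr_less_mono2_neg) auto
  also have "(w$j powr (- a)) powr (-1/a) = w$j"
    using a wpos[rule_format, of j] by (simp add: powr_powr)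
  finally show ?thesis using j by simp
qed

lemma Lfun_mono:
  fixes w :: "real^'d"
  assumes card: "CARD('d) \<ge> 2" and wpos: "\<forall>i. 0 < w$i" and \<alpha>: "0 \<le> \<alpha>" and lt: "\<alpha> < \<beta>"
  shows "Lfun \<alpha> w < Lfun \<beta> w"
proof (cases "\<alpha> = 0")
  case True
  show ?thesis
  proof (cases "\<beta> = \<infinity>")
    case True
    then show ?thesis using \<open>\<alpha> = 0\<close> Min_pos[OF wpos] unfolding Lfun_def by simp
  next
    case False
    then obtain b where "\<beta> = ereal b" "b > 0" using lt True by (cases \<beta>) auto
    then show ?thesis using \<open>\<alpha> = 0\<close> Spos[OF wpos, of b] unfolding Lfun_def by simp
  qed
next
  case False
  then obtain a where a: "\<alpha> = ereal a" "a > 0" using \<alpha> lt by (cases \<alpha>) auto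
  show ?thesis
  proof (cases "\<beta> = \<infinity>")
    case True
    then show ?thesis using a Lfun_min_bound[OF card wpos a(2)] unfolding Lfun_def by simp
  next
    case False
    then obtain b where "\<beta> = ereal b" "a < b" using lt a by (cases \<beta>) auto
    then show ?thesis using a norm_ineq[OF card wpos a(2), of b] unfolding Lfun_def by simp
  qed
qed



lemma tdf_eq:
  fixes C :: "real^'d \<Rightarrow> real"
  assumes "CARD('d) \<ge> 2" "strict_generator \<phi>" "archimedean_with C \<phi>" "reg_var_zero \<phi> \<alpha>"
    "\<forall>i. 0 < w$i"
  shows "tail_dep_fun C w = Lfun \<alpha> w"
  unfolding tail_dep_fun_def
  by (rule tendsto_Lim[OF _ tail_limit[OF assms]]) (simp add: trivial_limit_at_right_real)

theorem mainTheorem14: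
  fixes C1 C2 :: "real^'d \<Rightarrow> real" and \<phi>1 \<phi>2 :: "real \<Rightarrow> real" and \<alpha>1 \<alpha>2 :: ereal
  assumes "CARD('d) \<ge> 2"
    and "is_copula C1" and "is_copula C2"
    and "strict_generator \<phi>1" and "strict_generator \<phi>2"
    and "archimedean_with C1 \<phi>1" and "archimedean_with C2 \<phi>2"
    and "reg_var_zero \<phi>1 \<alpha>1" and "reg_var_zero \<phi>2 \<alpha>2"
  shows "(TD_less C1 C2 \<longleftrightarrow> tail_dep_coef C1 < tail_dep_coef C2)
       \<and> (tail_dep_coef C1 < tail_dep_coef C2 \<longleftrightarrow> \<alpha>1 < \<alpha>2)"
proof -
  have a1: "0 \<le> \<alpha>1" and a2: "0 \<le> \<alpha>2" using assms(8,9) unfolding reg_var_zero_def by auto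
  have t1: "tail_dep_fun C1 w = Lfun \<alpha>1 w" if "\<forall>i. 0 < w$i" for w
    by (rule tdf_eq[OF assms(1,4,6,8) that])
  have t2: "tail_dep_fun C2 w = Lfun \<alpha>2 w" if "\<forall>i. 0 < w$i" for w
    by (rule tdf_eq[OF assms(1,5,7,9) that])
  define one :: "real^'d" where "one = (\<chi> i. 1)"
  have onep: "\<forall>i. 0 < one$i" unfolding one_def by simp
  have c1: "tail_dep_coef C1 = Lfun \<alpha>1 one" unfolding tail_dep_coef_def one_def[symmetric]
    by (rule t1[OF onep])
  have c2: "tail_dep_coef C2 = Lfun \<alpha>2 one" unfolding tail_dep_coef_def one_def[symmetric]
    by (rule t2[OF onep])
  have iff2: "tail_dep_coef C1 < tail_dep_coef C2 \<longleftrightarrow> \<alpha>1 < \<alpha>2"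
  proof
    assume l: "tail_dep_coef C1 < tail_dep_coef C2"
    show "\<alpha>1 < \<alpha>2"
    proof (rule ccontr)
      assume "\<not> \<alpha>1 < \<alpha>2"
      then have "\<alpha>2 = \<alpha>1 \<or> \<alpha>2 < \<alpha>1" by auto
      then show False
      proof
        assume "\<alpha>2 = \<alpha>1" then show False using l c1 c2 by simp
      next
        assume "\<alpha>2 < \<alpha>1" then show False
          using Lfun_mono[OF assms(1) onep a2] l c1 c2 by fastforce
      qed
    qed
  next
    assume "\<alpha>1 < \<alpha>2" then show "tail_dep_coef C1 < tail_dep_coef C2"
      using Lfun_mono[OF assms(1) onep a1] c1 c2 by simp
  qed
  have iff1: "TD_less C1 C2 \<longleftrightarrow> tail_dep_coef C1 < tail_dep_coef C2"
  proof
    assume "TD_less C1 C2"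
    then show "tail_dep_coef C1 < tail_dep_coef C2"
      unfolding TD_less_def tail_dep_coef_def by simp
  next
    assume "tail_dep_coef C1 < tail_dep_coef C2"
    then have lt: "\<alpha>1 < \<alpha>2" using iff2 by simp
    show "TD_less C1 C2" unfolding TD_less_def
      using t1 t2 Lfun_mono[OF assms(1) _ a1 lt] by simp
  qed
  show ?thesis using iff1 iff2 by simp
qed


end
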